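(* Consider Algorithm SS-SQP (described in the context) under the standing assumptions (A1), (A2). Let $\kappa_l>0$ be a constant such that for all $k$, $\Delta l(x_k,\bar\tau_k,\bar g_k,\bar d_k)\ge\kappa_l\bar\tau_k(\|\bar d_k\|^2+\|c_k\|)$ and $\Delta l(x_k,\tau_k,\nabla f_k,d_k)\ge\kappa_l\tau_k(\|d_k\|^2+\|c_k\|)$ (such a constant exists). Then for all $k\in\mathbb{N}$: (1) if $\|\bar g_k-\nabla f_k\|\le\kappa_{\mathrm{FO}}\alpha_k\sqrt{\Delta l(x_k,\bar\tau_k,\bar g_k,\bar d_k)}$, then $$|\nabla f_k^Td_k-\bar g_k^T\bar d_k|\le\left(\frac{(1+\kappa_H\zeta^{-1})\kappa_{\mathrm{FO}}\alpha_k}{\sqrt{\kappa_l\bar\tau_k}}+\frac{\kappa_{\mathrm{FO}}^2\alpha_k^2}{\zeta}\right)\Delta l(x_k,\bar\tau_k,\bar g_k,\bar d_k)$$ and $$|d_k^TH_kd_k-\bar d_k^TH_k\bar d_k|\le\left(\frac{2\kappa_H\zeta^{-1}\kappa_{\mathrm{FO}}\alpha_k}{\sqrt{\kappa_l\bar\tau_k}}+\frac{\kappa_H\kappa_{\mathrm{FO}}^2\alpha_k^2}{\zeta^2}\right)\Delta l(x_k,\bar\tau_k,\bar g_k,\bar d_k);$$ (2) if $\|\bar g_k-\nabla f_k\|\le\epsilon_g$, then $$|\nabla f_k^Td_k-\bar g_k^T\bar d_k|\le\frac{(1+\kappa_H\zeta^{-1})\epsilon_g}{\sqrt{\kappa_l\tau_k}}\sqrt{\Delta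 l(x_k,\tau_k,\nabla f_k,d_k)}+\zeta^{-1}\epsilon_g^2$$ and $$|d_k^TH_kd_k-\bar d_k^TH_k\bar d_k|\le\frac{2\kappa_H\zeta^{-1}\epsilon_g}{\sqrt{\kappa_l\tau_k}}\sqrt{\Delta l(x_k,\tau_k,\nabla f_k,d_k)}+\kappa_H\zeta^{-2}\epsilon_g^2.$$
   Context: Problem: $\min_{x\in\mathbb{R}^n}f(x)$ s.t. $c(x)=0$ with $f,c$ continuously differentiable, $c:\mathbb{R}^n\to\mathbb{R}^m$, $m\le n$; $\nabla f_k=\nabla f(x_k)$, $c_k=c(x_k)$, $J_k=\nabla c(x_k)^T$; $\|\cdot\|$ Euclidean norm. $\Delta l(x,\tau,g,d)=-\tau g^Td+\|c(x)\|_1$. $\kappa_{\mathrm{FO}},\epsilon_g\ge0$ are constants (first-order oracle parameters). Standing assumption (A1): there is an open convex set $\mathcal{X}$ containing all iterates and trial iterates; $f$ bounded below, $\nabla f$ $L$-Lipschitz and bounded, $c$ bounded, each $\nabla c_i$ Lipschitz and bounded on $\mathcal{X}$; singular values of $\nabla c(x)^T$ bounded away from zero on $\mathcal{X}$. (A2): $H_k$ symmetric, chosen independently of $\bar g_k$, $\|H_k\|\le\kappa_H$, $u^TH_ku\ge\zeta\|u\|^2$ for $u\in\mathrm{Null}(J_k)$, $\kappa_H,\zeta>0$. Algorithm SS-SQP: inputs $x_0$, $\bar\tau_{-1}>0$, $\alpha_{\max}\in(0,1]$, $\alpha_0\in(0,\alpha_{\max}]$, $\epsilon_f\ge0$, $\gamma,\theta,\sigma,\epsilon_\tau\in(0,1)$.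 At iteration $k$: random gradient estimate $\bar g_k$; solve $\begin{bmatrix}H_k & J_k^T\\ J_k&0\end{bmatrix}\begin{bmatrix}\bar d_k\\ \bar y_k\end{bmatrix}=-\begin{bmatrix}\bar g_k\\ c_k\end{bmatrix}$; $\bar\tau_k^{\rm trial}=\infty$ if $\bar g_k^T\bar d_k+\max\{\bar d_k^TH_k\bar d_k,0\}\le0$, else $(1-\sigma)\|c_k\|_1/(\bar g_k^T\bar d_k+\max\{\bar d_k^TH_k\bar d_k,0\})$; $\bar\tau_k=\bar\tau_{k-1}$ if $\bar\tau_{k-1}\le\bar\tau_k^{\rm trial}$, else $\min\{(1-\epsilon_\tau)\bar\tau_{k-1},\bar\tau_k^{\rm trial}\}$; $x_k^+=x_k+\alpha_k\bar d_k$; with objective estimates $\bar f$ and $\bar\phi(x,\tau;\xi)=\tau\bar f(x;\xi)+\|c(x)\|_1$, set $x_{k+1}=x_k^+$, $\alpha_{k+1}=\min\{\alpha_{\max},\alpha_k/\gamma\}$ if $\bar\phi(x_k^+,\bar\tau_k;\xi_k^+)\le\bar\phi(x_k,\bar\tau_k;\xi_k^0)-\alpha_k\theta\Delta l(x_k,\bar\tau_k,\bar g_k,\bar d_k)+2\bar\tau_k\epsilon_f$, else $x_{k+1}=x_k$, $\alpha_{k+1}=\gamma\alpha_k$. Deterministic quantities: $(d_k,y_k)$ solves the same system with $\bar g_k$ replaced by $\nabla f_k$; $\tau_k^{\rm trial}=\infty$ if $\nabla f_k^Td_k+\max\{d_k^TH_kd_k,0\}\le0$, else $(1-\sigma)\|c_k\|_1/(\nabla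 f_k^Td_k+\max\{d_k^TH_kd_k,0\})$; $\tau_k=\bar\tau_k$ if $\bar\tau_k\le\tau_k^{\rm trial}$, else $\tau_k=\min\{(1-\epsilon_\tau)\bar\tau_k,\tau_k^{\rm trial}\}$. *)

theory Defs
  imports "HOL-Analysis.Analysis"
begin

text \<open>Vectors of R^n are real^'n, vectors of R^m are real^'m; the Jacobian
  J(x) = nabla c(x)^T is an m x n matrix real^'n^'m.\<close>

definition l1norm :: "real^'m \<Rightarrow> real" where
  "l1norm v = (\<Sum>i\<in>UNIV. \<bar>v $ i\<bar>)"

definition Delta_l :: "real^'m \<Rightarrow> real \<Rightarrow> real^'n \<Rightarrow> real^'n \<Rightarrow> real" where
  "Delta_l cx tau g d = - tau * (g \<bullet> d) + l1norm cx"

text \<open>Merit parameter update. The trial value is +infinity when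
  g^T d + max(d^T H d,0) <= 0; then tau_prev <= trial always holds.\<close>
definition tau_update :: "real \<Rightarrow> real \<Rightarrow> real \<Rightarrow> real^'n \<Rightarrow> real^'n \<Rightarrow> real^'n^'n \<Rightarrow> real^'m \<Rightarrow> real" where
  "tau_update sig eps_tau tau_prev g d H cx =
     (let den = g \<bullet> d + max (d \<bullet> (H *v d)) 0 in
      if den \<le> 0 then tau_prev
      else (let trial = (1 - sig) * l1norm cx / den in
            if tau_prev \<le> trial then tau_prev else min ((1 - eps_tau) * tau_prev) trial))"

definition sqp_system :: "real^'n^'n \<Rightarrow> real^'n^'m \<Rightarrow> real^'n \<Rightarrow> real^'m \<Rightarrow> real^'n \<Rightarrow> real^'m \<Rightarrow> bool" where
  "sqp_system H J g cx d y \<longleftrightarrow> H *v d + transpose J *v y = - g \<and> J *v d = - cx"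

definition problem_data :: "(real^'n \<Rightarrow> real) \<Rightarrow> (real^'n \<Rightarrow> real^'n) \<Rightarrow> (real^'n \<Rightarrow> real^'m) \<Rightarrow> (real^'n \<Rightarrow> real^'n^'m) \<Rightarrow> bool" where
  "problem_data f gf c Jc \<longleftrightarrow>
     CARD('m) \<le> CARD('n) \<and>
     (\<forall>x. (f has_derivative (\<lambda>h. gf x \<bullet> h)) (at x)) \<and> continuous_on UNIV gf \<and>
     (\<forall>x. (c has_derivative (\<lambda>h. Jc x *v h)) (at x)) \<and> continuous_on UNIV Jc"

text \<open>Row i of Jc x is nabla c_i(x). Singular values of nabla c(x)^T bounded away from zero
  is written as ||J(x)^T v|| >= s ||v|| for all v (m <= n).\<close>
definition assumption_A1 :: "(real^'n) set \<Rightarrow> (nat \<Rightarrow> real^'n) \<Rightarrow> (nat \<Rightarrow> real^'n) \<Rightarrow> (real^'n \<Rightarrow> real) \<Rightarrow> (real^'n \<Rightarrow> real^'n) \<Rightarrow> (real^'n \<Rightarrow> real^'m) \<Rightarrow> (real^'n \<Rightarrow> real^'n^'m) \<Rightarrow> bool" where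
  "assumption_A1 X xs xp f gf c Jc \<longleftrightarrow>
     open X \<and> convex X \<and> (\<forall>k. xs k \<in> X) \<and> (\<forall>k. xp k \<in> X) \<and>
     (\<exists>flow. \<forall>x\<in>X. flow \<le> f x) \<and>
     (\<exists>L. \<forall>x\<in>X. \<forall>y\<in>X. norm (gf x - gf y) \<le> L * norm (x - y)) \<and>
     (\<exists>B. \<forall>x\<in>X. norm (gf x) \<le> B) \<and>
     (\<exists>B. \<forall>x\<in>X. norm (c x) \<le> B) \<and>
     (\<forall>i. \<exists>L. \<forall>x\<in>X. \<forall>y\<in>X. norm (Jc x $ i - Jc y $ i) \<le> L * norm (x - y)) \<and>
     (\<forall>i. \<exists>B. \<forall>x\<in>X. norm (Jc x $ i) \<le> B) \<and>
     (\<exists>s>0. \<forall>x\<in>X. \<forall>v. s * norm v \<le> norm (transpose (Jc x) *v v))"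

definition assumption_A2 :: "(nat \<Rightarrow> real^'n^'n) \<Rightarrow> (nat \<Rightarrow> real^'n^'m) \<Rightarrow> real \<Rightarrow> real \<Rightarrow> bool" where
  "assumption_A2 H J kappaH zeta \<longleftrightarrow> kappaH > 0 \<and> zeta > 0 \<and>
     (\<forall>k. transpose (H k) = H k \<and> onorm (\<lambda>v. H k *v v) \<le> kappaH \<and>
          (\<forall>u. J k *v u = 0 \<longrightarrow> zeta * (norm u)\<^sup>2 \<le> u \<bullet> (H k *v u)))"

text \<open>One realization of Algorithm SS-SQP. gb k is the realized gradient estimate,
  fb the objective estimator with realized sample values xi0 k, xip k.\<close>
definition ss_sqp_run ::
  "(real^'n \<Rightarrow> real^'m) \<Rightarrow> (real^'n \<Rightarrow> real^'n^'m) \<Rightarrow>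
   (real^'n \<Rightarrow> 'w \<Rightarrow> real) \<Rightarrow> (nat \<Rightarrow> 'w) \<Rightarrow> (nat \<Rightarrow> 'w) \<Rightarrow>
   real \<Rightarrow> real \<Rightarrow> real \<Rightarrow> real \<Rightarrow> real \<Rightarrow> real \<Rightarrow> real \<Rightarrow>
   (nat \<Rightarrow> real^'n^'n) \<Rightarrow> (nat \<Rightarrow> real^'n) \<Rightarrow> (nat \<Rightarrow> real^'n) \<Rightarrow> (nat \<Rightarrow> real^'n) \<Rightarrow> (nat \<Rightarrow> real^'m) \<Rightarrow>
   (nat \<Rightarrow> real) \<Rightarrow> (nat \<Rightarrow> real) \<Rightarrow> bool" where
  "ss_sqp_run c Jc fb xi0 xip taubm1 alpha_max eps_f gamma theta sig eps_tau
      H x gb db yb taub alpha \<longleftrightarrow>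
     taubm1 > 0 \<and> 0 < alpha_max \<and> alpha_max \<le> 1 \<and> 0 < alpha 0 \<and> alpha 0 \<le> alpha_max \<and>
     eps_f \<ge> 0 \<and> 0 < gamma \<and> gamma < 1 \<and> 0 < theta \<and> theta < 1 \<and>
     0 < sig \<and> sig < 1 \<and> 0 < eps_tau \<and> eps_tau < 1 \<and>
     (\<forall>k. sqp_system (H k) (Jc (x k)) (gb k) (c (x k)) (db k) (yb k)) \<and>
     taub 0 = tau_update sig eps_tau taubm1 (gb 0) (db 0) (H 0) (c (x 0)) \<and>
     (\<forall>k. taub (Suc k) = tau_update sig eps_tau (taub k) (gb (Suc k)) (db (Suc k)) (H (Suc k)) (c (x (Suc k)))) \<and>
     (\<forall>k. let xplus = x k + alpha k *\<^sub>R db k in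
          if taub k * fb xplus (xip k) + l1norm (c xplus)
             \<le> taub k * fb (x k) (xi0 k) + l1norm (c (x k))
                - alpha k * theta * Delta_l (c (x k)) (taub k) (gb k) (db k) + 2 * taub k * eps_f
          then x (Suc k) = xplus \<and> alpha (Suc k) = min alpha_max (alpha k / gamma)
          else x (Suc k) = x k \<and> alpha (Suc k) = gamma * alpha k)"

end

theory Submission
  imports Defs
begin


lemma inner_transpose: "(a::real^'n) \<bullet> (transpose (J::real^'n^'m) *v w) = (J *v a) \<bullet> w"
  by (metis transpose_matrix_vector dot_lmul_matrix inner_commute)

lemma inner_vmul: "(a::real^'n) \<bullet> (w v* (J::real^'n^'m)) = (J *v a) \<bullet> w"
  using inner_transpose[of a J w] by simp

lemma Hsym: assumes "transpose (H::real^'n^'n) = H" shows "(a::real^'n) \<bullet> (H *v b) = b \<bullet> (H *v a)"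
  by (metis assms inner_transpose inner_commute)

lemma Hbnd: "onorm (\<lambda>v. (H::real^'n^'n) *v v) \<le> kH \<Longrightarrow> norm (H *v v) \<le> kH * norm v"
  by (metis (no_types) matrix_vector_mul_bounded_linear onorm order_trans mult_right_mono norm_ge_zero)

lemma Hbil: "onorm (\<lambda>v. (H::real^'n^'n) *v v) \<le> kH \<Longrightarrow> \<bar>a \<bullet> (H *v v)\<bar> \<le> kH * norm a * norm v"
proof -
  assume h: "onorm (\<lambda>v. H *v v) \<le> kH"
  have "\<bar>a \<bullet> (H *v v)\<bar> \<le> norm a * norm (H *v v)" by (rule Cauchy_Schwarz_ineq2)
  also have "\<dots> \<le> norm a * (kH * norm v)" using Hbnd[OF h] by (simp add: mult_left_mono)
  finally show ?thesis by (simp add: mult_ac)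
qed

lemma core:
  fixes H :: "real^'n^'n" and J :: "real^'n^'m"
  assumes sym: "transpose H = H" and bnd: "onorm (\<lambda>v. H *v v) \<le> kH"
    and pd: "\<forall>u. J *v u = 0 \<longrightarrow> zeta * (norm u)\<^sup>2 \<le> u \<bullet> (H *v u)" and z: "zeta > 0"
    and s1: "sqp_system H J g cx d y" and s2: "sqp_system H J gb cx db yb"
  shows "norm (d - db) \<le> norm (gb - g) / zeta"
    and "\<bar>g \<bullet> d - gb \<bullet> db\<bar> \<le> (1 + kH / zeta) * norm (gb - g) * norm db + (norm (gb - g))\<^sup>2 / zeta"
    and "\<bar>g \<bullet> d - gb \<bullet> db\<bar> \<le> (1 + kH / zeta) * norm (gb - g) * norm d + (norm (gb - g))\<^sup>2 / zeta"
    and "\<bar>d \<bullet> (H *v d) - db \<bullet> (H *v db)\<bar> \<le> 2 * kH / zeta * norm (gb - g) * norm db + kH * (norm (gb - g))\<^sup>2 / zeta\<^sup>2"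
    and "\<bar>d \<bullet> (H *v d) - db \<bullet> (H *v db)\<bar> \<le> 2 * kH / zeta * norm (gb - g) * norm d + kH * (norm (gb - g))\<^sup>2 / zeta\<^sup>2"
proof -
  define u where "u = d - db"
  define dl where "dl = gb - g"
  have e1: "H *v d + transpose J *v y = - g" "J *v d = - cx" using s1 by (auto simp: sqp_system_def)
  have e2: "H *v db + transpose J *v yb = - gb" "J *v db = - cx" using s2 by (auto simp: sqp_system_def)
  have Ju: "J *v u = 0" using e1(2) e2(2) by (simp add: u_def matrix_vector_mult_diff_distrib)
  have Hu: "H *v u + transpose J *v (y - yb) = dl"
    using e1(1) e2(1) unfolding u_def dl_def
    by (simp add: matrix_vector_mult_diff_distrib algebra_simps)
  have uHu: "u \<bullet> (H *v u) = u \<bullet> dl"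
  proof -
    have "u \<bullet> dl = u \<bullet> (H *v u) + u \<bullet> (transpose J *v (y - yb))" using Hu by (metis inner_add_right)
    also have "u \<bullet> (transpose J *v (y - yb)) = 0" using Ju by (simp add: inner_vmul)
    finally show ?thesis by simp
  qed
  have gu: "g \<bullet> u = - (d \<bullet> (H *v u))"
  proof -
    have "g = - (H *v d + transpose J *v y)" using e1(1) by simp
    hence "g \<bullet> u = - (u \<bullet> (H *v d)) - u \<bullet> (transpose J *v y)" by (simp add: inner_commute inner_add_right inner_diff_right)
    also have "u \<bullet> (transpose J *v y) = 0" using Ju by (simp add: inner_vmul)
    finally show ?thesis using Hsym[OF sym, of u d] by simp
  qed
  have gbu: "gb \<bullet> u = - (db \<bullet> (H *v u))"
  proof -
    have "gb = - (H *v db + transpose J *v yb)" using e2(1) by simp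
    hence "gb \<bullet> u = - (u \<bullet> (H *v db)) - u \<bullet> (transpose J *v yb)" by (simp add: inner_commute inner_add_right inner_diff_right)
    also have "u \<bullet> (transpose J *v yb) = 0" using Ju by (simp add: inner_vmul)
    finally show ?thesis using Hsym[OF sym, of u db] by simp
  qed
  have "zeta * (norm u)\<^sup>2 \<le> norm u * norm dl"
    using pd Ju uHu Cauchy_Schwarz_ineq2[of u dl] by (metis abs_le_D1 order_trans)
  hence nu: "norm u \<le> norm dl / zeta"
    using z by (cases "norm u = 0") (auto simp: power2_eq_square field_simps)
  thus "norm (d - db) \<le> norm (gb - g) / zeta" by (simp add: u_def dl_def)
  have ndl: "norm dl \<ge> 0" "norm u \<ge> 0" by auto
  have uu: "\<bar>u \<bullet> dl\<bar> \<le> (norm dl)\<^sup>2 / zeta"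
  proof -
    have "\<bar>u \<bullet> dl\<bar> \<le> norm u * norm dl" by (rule Cauchy_Schwarz_ineq2)
    also have "\<dots> \<le> norm dl / zeta * norm dl" using nu by (simp add: mult_right_mono del: times_divide_eq_left)
    finally show ?thesis by (simp add: power2_eq_square)
  qed
  have uHu2: "\<bar>u \<bullet> (H *v u)\<bar> \<le> kH * (norm dl)\<^sup>2 / zeta\<^sup>2"
  proof -
    have "\<bar>u \<bullet> (H *v u)\<bar> \<le> kH * norm u * norm u" by (rule Hbil[OF bnd])
    moreover have "kH \<ge> 0" using bnd onorm_pos_le[OF matrix_vector_mul_bounded_linear[of H]] by linarith
    ultimately have "\<bar>u \<bullet> (H *v u)\<bar> \<le> kH * (norm dl / zeta) * (norm dl / zeta)"
      using nu by (smt (verit) mult_left_mono mult_mono norm_ge_zero mult_nonneg_nonneg)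
    thus ?thesis by (simp add: power2_eq_square)
  qed
  have kH0: "kH \<ge> 0" using bnd onorm_pos_le[OF matrix_vector_mul_bounded_linear[of H]] by linarith
  have cross: "\<bar>a \<bullet> (H *v u)\<bar> \<le> kH / zeta * norm dl * norm a" for a
  proof -
    have "\<bar>a \<bullet> (H *v u)\<bar> \<le> kH * norm a * norm u" by (rule Hbil[OF bnd])
    also have "\<dots> \<le> kH * norm a * (norm dl / zeta)" using nu kH0 by (intro mult_left_mono) auto
    finally show ?thesis by (simp add: field_simps)
  qed
  have dd: "d = db + u" by (simp add: u_def)
  have gg: "gb = g + dl" by (simp add: dl_def)
  have "g \<bullet> d - gb \<bullet> db = - (dl \<bullet> db) - dl \<bullet> u + gb \<bullet> u"
    unfolding dd gg by (simp add: inner_add_left inner_add_right inner_commute)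
  hence "\<bar>g \<bullet> d - gb \<bullet> db\<bar> \<le> norm dl * norm db + (norm dl)\<^sup>2 / zeta + kH / zeta * norm dl * norm db"
    using Cauchy_Schwarz_ineq2[of dl db] uu cross[of db] gbu by (simp add: inner_commute)
  thus "\<bar>g \<bullet> d - gb \<bullet> db\<bar> \<le> (1 + kH / zeta) * norm (gb - g) * norm db + (norm (gb - g))\<^sup>2 / zeta"
    by (simp add: dl_def algebra_simps)
  have "g \<bullet> d - gb \<bullet> db = g \<bullet> u - dl \<bullet> d + dl \<bullet> u"
    unfolding gg using dd by (simp add: inner_add_left inner_add_right inner_diff_right inner_commute algebra_simps)
  hence "\<bar>g \<bullet> d - gb \<bullet> db\<bar> \<le> kH / zeta * norm dl * norm d + norm dl * norm d + (norm dl)\<^sup>2 / zeta"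
    using Cauchy_Schwarz_ineq2[of dl d] uu cross[of d] gu by (simp add: inner_commute)
  thus "\<bar>g \<bullet> d - gb \<bullet> db\<bar> \<le> (1 + kH / zeta) * norm (gb - g) * norm d + (norm (gb - g))\<^sup>2 / zeta"
    by (simp add: dl_def algebra_simps)
  have "d \<bullet> (H *v d) - db \<bullet> (H *v db) = 2 * (db \<bullet> (H *v u)) + u \<bullet> (H *v u)"
    unfolding dd using Hsym[OF sym, of u db]
    by (simp add: matrix_vector_right_distrib inner_add_left inner_add_right)
  hence "\<bar>d \<bullet> (H *v d) - db \<bullet> (H *v db)\<bar> \<le> 2 * (kH / zeta * norm dl * norm db) + kH * (norm dl)\<^sup>2 / zeta\<^sup>2"
    using cross[of db] uHu2 by linarith
  thus "\<bar>d \<bullet> (H *v d) - db \<bullet> (H *v db)\<bar> \<le> 2 * kH / zeta * norm (gb - g) * norm db + kH * (norm (gb - g))\<^sup>2 / zeta\<^sup>2"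
    by (simp add: dl_def)
  have dd2: "db = d - u" by (simp add: u_def)
  have "d \<bullet> (H *v d) - db \<bullet> (H *v db) = 2 * (d \<bullet> (H *v u)) - u \<bullet> (H *v u)"
    unfolding dd2 using Hsym[OF sym, of u d]
    by (simp add: matrix_vector_mult_diff_distrib inner_diff_left inner_diff_right)
  hence "\<bar>d \<bullet> (H *v d) - db \<bullet> (H *v db)\<bar> \<le> 2 * (kH / zeta * norm dl * norm d) + kH * (norm dl)\<^sup>2 / zeta\<^sup>2"
    using cross[of d] uHu2 by linarith
  thus "\<bar>d \<bullet> (H *v d) - db \<bullet> (H *v db)\<bar> \<le> 2 * kH / zeta * norm (gb - g) * norm d + kH * (norm (gb - g))\<^sup>2 / zeta\<^sup>2"
    by (simp add: dl_def)
qed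

lemma l1norm_nonneg: "l1norm v \<ge> 0"
  unfolding l1norm_def by (simp add: sum_nonneg)

lemma l1norm_zero: "l1norm (v::real^'m) = 0 \<Longrightarrow> v = 0"
  unfolding l1norm_def by (simp add: sum_nonneg_eq_0_iff vec_eq_iff)

lemma tau_pos:
  fixes H :: "real^'n^'n" and J :: "real^'n^'m"
  assumes "tau > 0" "0 < sig" "sig < 1" "0 < eps" "eps < 1"
    and s: "sqp_system H J g cx d y"
    and pd: "\<forall>u. J *v u = 0 \<longrightarrow> zeta * (norm u)\<^sup>2 \<le> u \<bullet> (H *v u)" and z: "zeta > 0"
  shows "tau_update sig eps tau g d H cx > 0"
proof -
  define den where "den = g \<bullet> d + max (d \<bullet> (H *v d)) 0"
  have "l1norm cx > 0" if dp: "den > 0"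
  proof (rule ccontr)
    assume "\<not> l1norm cx > 0"
    hence "l1norm cx = 0" using l1norm_nonneg[of cx] by linarith
    hence c0: "cx = 0" by (rule l1norm_zero)
    have e: "H *v d + transpose J *v y = - g" "J *v d = 0" using s c0 by (auto simp: sqp_system_def)
    have "0 \<le> zeta * (norm d)\<^sup>2" using z by simp
    hence dH: "d \<bullet> (H *v d) \<ge> 0" using pd e(2) by (meson order_trans)
    have "g = - (H *v d + transpose J *v y)" using e(1) by simp
    hence "g \<bullet> d = - (d \<bullet> (H *v d)) - d \<bullet> (transpose J *v y)"
      by (simp add: inner_commute inner_add_right inner_diff_right)
    also have "d \<bullet> (transpose J *v y) = 0" using e(2) by (simp add: inner_vmul)
    finally have "den = 0" using dH by (simp add: den_def)
    thus False using dp by simp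
  qed
  thus ?thesis using assms(1-5) unfolding tau_update_def Let_def den_def[symmetric]
    by (auto simp: min_def intro!: divide_pos_pos mult_pos_pos)
qed


theorem lemma3p16:
  fixes f :: "real^'n \<Rightarrow> real" and gf :: "real^'n \<Rightarrow> real^'n"
    and c :: "real^'n \<Rightarrow> real^'m" and Jc :: "real^'n \<Rightarrow> real^'n^'m"
    and fb :: "real^'n \<Rightarrow> 'w \<Rightarrow> real" and xi0 xip :: "nat \<Rightarrow> 'w"
    and H :: "nat \<Rightarrow> real^'n^'n" and x gb db d :: "nat \<Rightarrow> real^'n"
    and yb y :: "nat \<Rightarrow> real^'m" and taub alpha :: "nat \<Rightarrow> real"
    and X :: "(real^'n) set"
    and taubm1 alpha_max eps_f gamma theta sig eps_tau kappaH zeta kappaFO eps_g kappa_l :: real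
  assumes prob: "problem_data f gf c Jc"
    and run: "ss_sqp_run c Jc fb xi0 xip taubm1 alpha_max eps_f gamma theta sig eps_tau
                H x gb db yb taub alpha"
    and A1: "assumption_A1 X x (\<lambda>k. x k + alpha k *\<^sub>R db k) f gf c Jc"
    and A2: "assumption_A2 H (\<lambda>k. Jc (x k)) kappaH zeta"
    and det: "\<forall>k. sqp_system (H k) (Jc (x k)) (gf (x k)) (c (x k)) (d k) (y k)"
    and nonneg: "kappaFO \<ge> 0" "eps_g \<ge> 0"
    and kl_pos: "kappa_l > 0"
    and kl_bar: "\<forall>k. Delta_l (c (x k)) (taub k) (gb k) (db k)
                     \<ge> kappa_l * taub k * ((norm (db k))\<^sup>2 + norm (c (x k)))"
    and kl_det: "\<forall>k. Delta_l (c (x k)) (tau_update sig eps_tau (taub k) (gf (x k)) (d k) (H k) (c (x k)))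
                       (gf (x k)) (d k)
                     \<ge> kappa_l * tau_update sig eps_tau (taub k) (gf (x k)) (d k) (H k) (c (x k))
                         * ((norm (d k))\<^sup>2 + norm (c (x k)))"
  shows "\<forall>k. (let g = gf (x k); Hk = H k; ck = c (x k);
              tau = tau_update sig eps_tau (taub k) g (d k) Hk ck;
              Dlb = Delta_l ck (taub k) (gb k) (db k);
              Dl = Delta_l ck tau g (d k) in
        (norm (gb k - g) \<le> kappaFO * alpha k * sqrt Dlb \<longrightarrow>
           \<bar>g \<bullet> d k - gb k \<bullet> db k\<bar>
             \<le> ((1 + kappaH / zeta) * kappaFO * alpha k / sqrt (kappa_l * taub k)
                 + kappaFO\<^sup>2 * (alpha k)\<^sup>2 / zeta) * Dlb
         \<and> \<bar>d k \<bullet> (Hk *v d k) - db k \<bullet> (Hk *v db k)\<bar>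
             \<le> (2 * kappaH / zeta * kappaFO * alpha k / sqrt (kappa_l * taub k)
                 + kappaH * kappaFO\<^sup>2 * (alpha k)\<^sup>2 / zeta\<^sup>2) * Dlb)
      \<and> (norm (gb k - g) \<le> eps_g \<longrightarrow>
           \<bar>g \<bullet> d k - gb k \<bullet> db k\<bar>
             \<le> (1 + kappaH / zeta) * eps_g / sqrt (kappa_l * tau) * sqrt Dl + eps_g\<^sup>2 / zeta
         \<and> \<bar>d k \<bullet> (Hk *v d k) - db k \<bullet> (Hk *v db k)\<bar>
             \<le> 2 * kappaH / zeta * eps_g / sqrt (kappa_l * tau) * sqrt Dl
                + kappaH * eps_g\<^sup>2 / zeta\<^sup>2))"
proof (intro allI)
  fix k
  have A2': "kappaH > 0" "zeta > 0" "transpose (H k) = H k" "onorm (\<lambda>v. H k *v v) \<le> kappaH"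
    "\<forall>u. Jc (x k) *v u = 0 \<longrightarrow> zeta * (norm u)\<^sup>2 \<le> u \<bullet> (H k *v u)"
    using A2 unfolding assumption_A2_def by auto
  have R: "taubm1 > 0" "0 < sig" "sig < 1" "0 < eps_tau" "eps_tau < 1"
    "\<forall>k. sqp_system (H k) (Jc (x k)) (gb k) (c (x k)) (db k) (yb k)"
    "taub 0 = tau_update sig eps_tau taubm1 (gb 0) (db 0) (H 0) (c (x 0))"
    "\<forall>k. taub (Suc k) = tau_update sig eps_tau (taub k) (gb (Suc k)) (db (Suc k)) (H (Suc k)) (c (x (Suc k)))"
    using run unfolding ss_sqp_run_def by auto
  have pdall: "\<forall>u. Jc (x j) *v u = 0 \<longrightarrow> zeta * (norm u)\<^sup>2 \<le> u \<bullet> (H j *v u)" for j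
    using A2 unfolding assumption_A2_def by auto
  have tbpos: "taub j > 0" for j
  proof (induction j)
    case 0 show ?case unfolding R(7) using R(1-5) R(6) pdall A2'(2) by (intro tau_pos[where zeta=zeta]) auto
  next
    case (Suc j) show ?case unfolding R(8)[rule_format] using Suc R(2-5) R(6) pdall A2'(2) by (intro tau_pos[where zeta=zeta]) auto
  qed
  define g where "g = gf (x k)"
  define tau where "tau = tau_update sig eps_tau (taub k) g (d k) (H k) (c (x k))"
  define Dlb where "Dlb = Delta_l (c (x k)) (taub k) (gb k) (db k)"
  define Dl where "Dl = Delta_l (c (x k)) tau g (d k)"
  have sd: "sqp_system (H k) (Jc (x k)) g (c (x k)) (d k) (y k)" using det g_def by auto
  have tpos: "tau > 0" unfolding tau_def using tbpos[of k] R(2-5) sd A2'(5) A2'(2) by (intro tau_pos[where zeta=zeta]) auto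
  note C = core[OF A2'(3) A2'(4) A2'(5) A2'(2) sd R(6)[rule_format, of k]]
  have klb: "Dlb \<ge> kappa_l * taub k * ((norm (db k))\<^sup>2 + norm (c (x k)))" using kl_bar Dlb_def by auto
  have kld: "Dl \<ge> kappa_l * tau * ((norm (d k))\<^sup>2 + norm (c (x k)))" using kl_det Dl_def tau_def g_def by auto
  have nb: "norm (db k) \<le> sqrt Dlb / sqrt (kappa_l * taub k)" and Dlb0: "Dlb \<ge> 0"
  proof -
    have p: "kappa_l * taub k > 0" using kl_pos tbpos[of k] by simp
    have "kappa_l * taub k * (norm (db k))\<^sup>2 \<le> Dlb" using klb p
      by (smt (verit) mult_left_mono norm_ge_zero)
    hence "(norm (db k))\<^sup>2 \<le> Dlb / (kappa_l * taub k)" using p by (simp add: field_simps)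
    hence "norm (db k) \<le> sqrt (Dlb / (kappa_l * taub k))" by (simp add: real_le_rsqrt)
    thus "norm (db k) \<le> sqrt Dlb / sqrt (kappa_l * taub k)" by (simp add: real_sqrt_divide)
    show "Dlb \<ge> 0" using klb p by (smt (verit) mult_nonneg_nonneg norm_ge_zero zero_le_power2)
  qed
  have nd: "norm (d k) \<le> sqrt Dl / sqrt (kappa_l * tau)" and Dl0: "Dl \<ge> 0"
  proof -
    have p: "kappa_l * tau > 0" using kl_pos tpos by simp
    have "kappa_l * tau * (norm (d k))\<^sup>2 \<le> Dl" using kld p
      by (smt (verit) mult_left_mono norm_ge_zero)
    hence "(norm (d k))\<^sup>2 \<le> Dl / (kappa_l * tau)" using p by (simp add: field_simps)
    hence "norm (d k) \<le> sqrt (Dl / (kappa_l * tau))" by (simp add: real_le_rsqrt)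
    thus "norm (d k) \<le> sqrt Dl / sqrt (kappa_l * tau)" by (simp add: real_sqrt_divide)
    show "Dl \<ge> 0" using kld p by (smt (verit) mult_nonneg_nonneg norm_ge_zero zero_le_power2)
  qed
  define N where "N = norm (gb k - g)"
  have N0: "N \<ge> 0" by (simp add: N_def)
  have kz: "kappaH / zeta \<ge> 0" using A2' by simp
  have part1: "(N \<le> kappaFO * alpha k * sqrt Dlb \<longrightarrow>
           \<bar>g \<bullet> d k - gb k \<bullet> db k\<bar>
             \<le> ((1 + kappaH / zeta) * kappaFO * alpha k / sqrt (kappa_l * taub k)
                 + kappaFO\<^sup>2 * (alpha k)\<^sup>2 / zeta) * Dlb
         \<and> \<bar>d k \<bullet> (H k *v d k) - db k \<bullet> (H k *v db k)\<bar>
             \<le> (2 * kappaH / zeta * kappaFO * alpha k / sqrt (kappa_l * taub k)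
                 + kappaH * kappaFO\<^sup>2 * (alpha k)\<^sup>2 / zeta\<^sup>2) * Dlb)"
  proof
    assume h: "N \<le> kappaFO * alpha k * sqrt Dlb"
    define s where "s = sqrt (kappa_l * taub k)"
    have s0: "s > 0" unfolding s_def using kl_pos tbpos[of k] by simp
    define a where "a = kappaFO * alpha k"
    have a0: "a * sqrt Dlb \<ge> 0" using h N0 unfolding a_def by linarith
    have ND: "N * norm (db k) \<le> a / s * Dlb"
    proof -
      have "N * norm (db k) \<le> (a * sqrt Dlb) * (sqrt Dlb / s)"
        using h nb a_def s_def N0 by (intro mult_mono) auto
      also have "\<dots> = a / s * Dlb" using Dlb0 by (simp add: field_simps)
      finally show ?thesis .
    qed
    have N2: "N\<^sup>2 \<le> a\<^sup>2 * Dlb"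
    proof -
      have "N\<^sup>2 \<le> (a * sqrt Dlb)\<^sup>2" using h N0 a_def by (intro power_mono) auto
      thus ?thesis using Dlb0 by (simp add: power_mult_distrib)
    qed
    have q1: "(1 + kappaH / zeta) * (N * norm (db k)) \<le> (1 + kappaH / zeta) * (a / s * Dlb)"
      using ND kz by (intro mult_left_mono) auto
    have q2: "N\<^sup>2 / zeta \<le> a\<^sup>2 * Dlb / zeta" using N2 A2'(2) by (simp add: divide_right_mono)
    have q3: "2 * kappaH / zeta * (N * norm (db k)) \<le> 2 * kappaH / zeta * (a / s * Dlb)"
      using ND kz by (intro mult_left_mono) auto
    have q4: "kappaH * N\<^sup>2 / zeta\<^sup>2 \<le> kappaH * (a\<^sup>2 * Dlb) / zeta\<^sup>2"
      using N2 A2'(1,2) by (intro divide_right_mono mult_left_mono) auto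
    show "\<bar>g \<bullet> d k - gb k \<bullet> db k\<bar>
             \<le> ((1 + kappaH / zeta) * kappaFO * alpha k / sqrt (kappa_l * taub k)
                 + kappaFO\<^sup>2 * (alpha k)\<^sup>2 / zeta) * Dlb
         \<and> \<bar>d k \<bullet> (H k *v d k) - db k \<bullet> (H k *v db k)\<bar>
             \<le> (2 * kappaH / zeta * kappaFO * alpha k / sqrt (kappa_l * taub k)
                 + kappaH * kappaFO\<^sup>2 * (alpha k)\<^sup>2 / zeta\<^sup>2) * Dlb"
    proof
      have "\<bar>g \<bullet> d k - gb k \<bullet> db k\<bar> \<le> (1 + kappaH / zeta) * (N * norm (db k)) + N\<^sup>2 / zeta"
        using C(2) N_def by (simp add: mult.assoc)
      also have "\<dots> \<le> (1 + kappaH / zeta) * (a / s * Dlb) + a\<^sup>2 * Dlb / zeta" using q1 q2 by linarith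
      also have "\<dots> = ((1 + kappaH / zeta) * kappaFO * alpha k / sqrt (kappa_l * taub k)
                 + kappaFO\<^sup>2 * (alpha k)\<^sup>2 / zeta) * Dlb"
        unfolding a_def s_def by (simp add: field_simps power_mult_distrib)
      finally show "\<bar>g \<bullet> d k - gb k \<bullet> db k\<bar> \<le> ((1 + kappaH / zeta) * kappaFO * alpha k / sqrt (kappa_l * taub k)
                 + kappaFO\<^sup>2 * (alpha k)\<^sup>2 / zeta) * Dlb" .
      have "\<bar>d k \<bullet> (H k *v d k) - db k \<bullet> (H k *v db k)\<bar> \<le> 2 * kappaH / zeta * (N * norm (db k)) + kappaH * N\<^sup>2 / zeta\<^sup>2"
        using C(4) N_def by (simp add: mult.assoc)
      also have "\<dots> \<le> 2 * kappaH / zeta * (a / s * Dlb) + kappaH * (a\<^sup>2 * Dlb) / zeta\<^sup>2" using q3 q4 by linarith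
      also have "\<dots> = (2 * kappaH / zeta * kappaFO * alpha k / sqrt (kappa_l * taub k)
                 + kappaH * kappaFO\<^sup>2 * (alpha k)\<^sup>2 / zeta\<^sup>2) * Dlb"
        unfolding a_def s_def by (simp add: field_simps power_mult_distrib)
      finally show "\<bar>d k \<bullet> (H k *v d k) - db k \<bullet> (H k *v db k)\<bar> \<le> (2 * kappaH / zeta * kappaFO * alpha k / sqrt (kappa_l * taub k)
                 + kappaH * kappaFO\<^sup>2 * (alpha k)\<^sup>2 / zeta\<^sup>2) * Dlb" .
    qed
  qed
  have part2: "(N \<le> eps_g \<longrightarrow>
           \<bar>g \<bullet> d k - gb k \<bullet> db k\<bar>
             \<le> (1 + kappaH / zeta) * eps_g / sqrt (kappa_l * tau) * sqrt Dl + eps_g\<^sup>2 / zeta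
         \<and> \<bar>d k \<bullet> (H k *v d k) - db k \<bullet> (H k *v db k)\<bar>
             \<le> 2 * kappaH / zeta * eps_g / sqrt (kappa_l * tau) * sqrt Dl
                + kappaH * eps_g\<^sup>2 / zeta\<^sup>2)"
  proof
    assume h: "N \<le> eps_g"
    define s where "s = sqrt (kappa_l * tau)"
    have ND: "N * norm (d k) \<le> eps_g * (sqrt Dl / s)"
      using h nd s_def N0 by (intro mult_mono) auto
    have N2: "N\<^sup>2 \<le> eps_g\<^sup>2" using h N0 by (intro power_mono) auto
    have q1: "(1 + kappaH / zeta) * (N * norm (d k)) \<le> (1 + kappaH / zeta) * (eps_g * (sqrt Dl / s))"
      using ND kz by (intro mult_left_mono) auto
    have q2: "N\<^sup>2 / zeta \<le> eps_g\<^sup>2 / zeta" using N2 A2'(2) by (simp add: divide_right_mono)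
    have q3: "2 * kappaH / zeta * (N * norm (d k)) \<le> 2 * kappaH / zeta * (eps_g * (sqrt Dl / s))"
      using ND kz by (intro mult_left_mono) auto
    have q4: "kappaH * N\<^sup>2 / zeta\<^sup>2 \<le> kappaH * eps_g\<^sup>2 / zeta\<^sup>2"
      using N2 A2'(1,2) by (intro divide_right_mono mult_left_mono) auto
    show "\<bar>g \<bullet> d k - gb k \<bullet> db k\<bar>
             \<le> (1 + kappaH / zeta) * eps_g / sqrt (kappa_l * tau) * sqrt Dl + eps_g\<^sup>2 / zeta
         \<and> \<bar>d k \<bullet> (H k *v d k) - db k \<bullet> (H k *v db k)\<bar>
             \<le> 2 * kappaH / zeta * eps_g / sqrt (kappa_l * tau) * sqrt Dl
                + kappaH * eps_g\<^sup>2 / zeta\<^sup>2"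
    proof
      have "\<bar>g \<bullet> d k - gb k \<bullet> db k\<bar> \<le> (1 + kappaH / zeta) * (N * norm (d k)) + N\<^sup>2 / zeta"
        using C(3) N_def by (simp add: mult.assoc)
      also have "\<dots> \<le> (1 + kappaH / zeta) * (eps_g * (sqrt Dl / s)) + eps_g\<^sup>2 / zeta" using q1 q2 by linarith
      also have "\<dots> = (1 + kappaH / zeta) * eps_g / sqrt (kappa_l * tau) * sqrt Dl + eps_g\<^sup>2 / zeta"
        unfolding s_def by (simp add: field_simps)
      finally show "\<bar>g \<bullet> d k - gb k \<bullet> db k\<bar> \<le> (1 + kappaH / zeta) * eps_g / sqrt (kappa_l * tau) * sqrt Dl + eps_g\<^sup>2 / zeta" .
      have "\<bar>d k \<bullet> (H k *v d k) - db k \<bullet> (H k *v db k)\<bar> \<le> 2 * kappaH / zeta * (N * norm (d k)) + kappaH * N\<^sup>2 / zeta\<^sup>2"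
        using C(5) N_def by (simp add: mult.assoc)
      also have "\<dots> \<le> 2 * kappaH / zeta * (eps_g * (sqrt Dl / s)) + kappaH * eps_g\<^sup>2 / zeta\<^sup>2" using q3 q4 by linarith
      also have "\<dots> = 2 * kappaH / zeta * eps_g / sqrt (kappa_l * tau) * sqrt Dl + kappaH * eps_g\<^sup>2 / zeta\<^sup>2"
        unfolding s_def by (simp add: field_simps)
      finally show "\<bar>d k \<bullet> (H k *v d k) - db k \<bullet> (H k *v db k)\<bar> \<le> 2 * kappaH / zeta * eps_g / sqrt (kappa_l * tau) * sqrt Dl
                + kappaH * eps_g\<^sup>2 / zeta\<^sup>2" .
    qed
  qed
  show "let g = gf (x k); Hk = H k; ck = c (x k);
              tau = tau_update sig eps_tau (taub k) g (d k) Hk ck;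
              Dlb = Delta_l ck (taub k) (gb k) (db k);
              Dl = Delta_l ck tau g (d k) in
        (norm (gb k - g) \<le> kappaFO * alpha k * sqrt Dlb \<longrightarrow>
           \<bar>g \<bullet> d k - gb k \<bullet> db k\<bar>
             \<le> ((1 + kappaH / zeta) * kappaFO * alpha k / sqrt (kappa_l * taub k)
                 + kappaFO\<^sup>2 * (alpha k)\<^sup>2 / zeta) * Dlb
         \<and> \<bar>d k \<bullet> (Hk *v d k) - db k \<bullet> (Hk *v db k)\<bar>
             \<le> (2 * kappaH / zeta * kappaFO * alpha k / sqrt (kappa_l * taub k)
                 + kappaH * kappaFO\<^sup>2 * (alpha k)\<^sup>2 / zeta\<^sup>2) * Dlb)
      \<and> (norm (gb k - g) \<le> eps_g \<longrightarrow>
           \<bar>g \<bullet> d k - gb k \<bullet> db k\<bar>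
             \<le> (1 + kappaH / zeta) * eps_g / sqrt (kappa_l * tau) * sqrt Dl + eps_g\<^sup>2 / zeta
         \<and> \<bar>d k \<bullet> (Hk *v d k) - db k \<bullet> (Hk *v db k)\<bar>
             \<le> 2 * kappaH / zeta * eps_g / sqrt (kappa_l * tau) * sqrt Dl
                + kappaH * eps_g\<^sup>2 / zeta\<^sup>2)"
    unfolding Let_def using part1 part2
    unfolding g_def[symmetric] tau_def[symmetric] Dlb_def[symmetric] Dl_def[symmetric] N_def[symmetric]
    by blast
qed

end
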